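(* Every concatenated stabiliser code family has infinite disjointness, i.e. $\lim_{l\to\infty}\Delta(l)=\infty$, where $\Delta(l)$ is the disjointness of the $l$-th code of the family.
   Context: A concatenated stabiliser code family is built from a sequence of non-trivial $[[n_i,1,d_i]]$ stabiliser quantum error-correcting codes ($i\in\mathbb{N}$) with $n_i$ bounded by a constant independent of $i$: the $l$-th code $\mathcal{C}_l$ is the $[[\prod_{i=1}^l n_i,1,\prod_{i=1}^l d_i]]$ code obtained by concatenating the first $l$ codes of the sequence (each physical qubit at one level is encoded into a block of the next code). Disjointness: for an integer $c\ge1$, a collection of representatives of a logical operator is $c$-disjoint if no physical qubit lies in the support of more than $c$ of them; the unnormalised $c$-disjointness $\Delta'_c$ is the largest integer such that every logical Pauli operator admits at least $\Delta'_c$ representatives forming a $c$-disjoint collection; $\Delta_c=\Delta'_c/c$, and the disjointness is $\Delta=\max_{c\in\mathbb{Z}_+}\Delta_c$. *)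

theory Defs
  imports Complex_Main
begin

text \<open>Pauli operators on qubits indexed by naturals, modulo phases, in the binary
  symplectic representation: at each qubit a pair (x-bit, z-bit);
  (False,False) = I, (True,False) = X, (False,True) = Z, (True,True) = Y.\<close>

type_synonym pauli = "nat \<Rightarrow> bool \<times> bool"

definition pid :: pauli where
  "pid = (\<lambda>_. (False, False))"

definition pmul :: "pauli \<Rightarrow> pauli \<Rightarrow> pauli" where
  "pmul p q = (\<lambda>i. (fst (p i) \<noteq> fst (q i), snd (p i) \<noteq> snd (q i)))"

definition pauli_on :: "nat \<Rightarrow> pauli set" where
  "pauli_on n = {p. \<forall>i\<ge>n. p i = (False, False)}"

definition supp :: "pauli \<Rightarrow> nat set" where
  "supp p = {i. p i \<noteq> (False, False)}"

definition anti1 :: "bool \<times> bool \<Rightarrow> bool \<times> bool \<Rightarrow> bool" where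
  "anti1 a b = ((fst a \<and> snd b) \<noteq> (snd a \<and> fst b))"

definition commutes :: "pauli \<Rightarrow> pauli \<Rightarrow> bool" where
  "commutes p q = even (card {i. anti1 (p i) (q i)})"

definition stab_group_1 :: "nat \<Rightarrow> pauli set \<Rightarrow> bool" where
  "stab_group_1 n S \<longleftrightarrow> 1 \<le> n \<and> S \<subseteq> pauli_on n \<and> pid \<in> S \<and>
     (\<forall>p\<in>S. \<forall>q\<in>S. pmul p q \<in> S) \<and> (\<forall>p\<in>S. \<forall>q\<in>S. commutes p q) \<and>
     card S = 2 ^ (n - 1)"

definition normaliser :: "nat \<Rightarrow> pauli set \<Rightarrow> pauli set" where
  "normaliser n S = {p \<in> pauli_on n. \<forall>s\<in>S. commutes p s}"

definition distance :: "nat \<Rightarrow> pauli set \<Rightarrow> nat" where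
  "distance n S = Min ((\<lambda>p. card (supp p)) ` (normaliser n S - S))"

definition stab_code :: "nat \<Rightarrow> pauli set \<Rightarrow> nat \<Rightarrow> bool" where
  "stab_code n S d \<longleftrightarrow> stab_group_1 n S \<and> distance n S = d"

text \<open>Nontrivial logical Pauli operators, each given as its set of representatives
  (a coset of the stabiliser group inside the normaliser).\<close>
definition logicals :: "nat \<Rightarrow> pauli set \<Rightarrow> pauli set set" where
  "logicals n S = {(pmul p) ` S | p. p \<in> normaliser n S - S}"

definition c_disjoint :: "nat \<Rightarrow> pauli set \<Rightarrow> bool" where
  "c_disjoint c R \<longleftrightarrow> (\<forall>q. card {r \<in> R. q \<in> supp r} \<le> c)"

definition udisj :: "nat \<Rightarrow> pauli set \<Rightarrow> nat \<Rightarrow> nat" where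
  "udisj n S c = (GREATEST m. \<forall>L \<in> logicals n S.
      \<exists>R. R \<subseteq> L \<and> finite R \<and> card R \<ge> m \<and> c_disjoint c R)"

definition disjointness :: "nat \<Rightarrow> pauli set \<Rightarrow> real" where
  "disjointness n S = Sup {real (udisj n S c) / real c | c. c \<ge> 1}"

text \<open>Concatenation: outer code (m,T), inner code (k,S2) with chosen logical
  representatives xb, zb.  Qubit j of block i (the block encoding outer qubit i)
  has index i*k + j.\<close>
definition enc :: "nat \<Rightarrow> pauli \<Rightarrow> pauli \<Rightarrow> pauli \<Rightarrow> pauli" where
  "enc k xb zb p = (\<lambda>a. let i = a div k; j = a mod k in
      ((fst (p i) \<and> fst (xb j)) \<noteq> (snd (p i) \<and> fst (zb j)),
       (fst (p i) \<and> snd (xb j)) \<noteq> (snd (p i) \<and> snd (zb j))))"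

definition block :: "nat \<Rightarrow> nat \<Rightarrow> pauli \<Rightarrow> pauli" where
  "block k i t = (\<lambda>j. if j < k then t (i * k + j) else (False, False))"

definition concat_stab :: "nat \<Rightarrow> pauli set \<Rightarrow> nat \<Rightarrow> pauli set \<Rightarrow> pauli \<Rightarrow> pauli \<Rightarrow> pauli set" where
  "concat_stab m T k S2 xb zb =
     {pmul (enc k xb zb s) t | s t. s \<in> T \<and> t \<in> pauli_on (m * k) \<and>
        (\<forall>i<m. block k i t \<in> S2)}"

text \<open>The concatenated family: fam l is the (l+1)-th code C_{l+1}, i.e. the
  concatenation of codes 0..l of the sequence (code l innermost).\<close>
fun fam :: "(nat \<Rightarrow> nat) \<Rightarrow> (nat \<Rightarrow> pauli set) \<Rightarrow> (nat \<Rightarrow> pauli) \<Rightarrow> (nat \<Rightarrow> pauli)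
            \<Rightarrow> nat \<Rightarrow> nat \<times> pauli set" where
  "fam n S xb zb 0 = (n 0, S 0)"
| "fam n S xb zb (Suc l) = (case fam n S xb zb l of (m, T) \<Rightarrow>
      (m * n (Suc l), concat_stab m T (n (Suc l)) (S (Suc l)) (xb (Suc l)) (zb (Suc l))))"

end

theory Submission
  imports Defs
begin


definition acnt :: "pauli \<Rightarrow> pauli \<Rightarrow> nat set" where
  "acnt p q = {i. anti1 (p i) (q i)}"

lemma commutes_acnt: "commutes p q = even (card (acnt p q))"
  by (simp add: commutes_def acnt_def)

lemma anti1_sym: "anti1 a b = anti1 b a"
  by (auto simp: anti1_def)

lemma acnt_sym: "acnt p q = acnt q p"
  unfolding acnt_def by (subst anti1_sym) (rule refl)

lemma commutes_sym: "commutes p q = commutes q p"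
  by (simp add: commutes_acnt acnt_sym)

lemma anti1_id[simp]: "\<not> anti1 (False, False) b" "\<not> anti1 b (False, False)"
  by (auto simp: anti1_def)

lemma anti1_self[simp]: "\<not> anti1 a a"
  by (auto simp: anti1_def)

lemma acnt_sub: assumes "p \<in> pauli_on n" shows "acnt p q \<subseteq> {..<n}"
proof
  fix i assume "i \<in> acnt p q"
  then have a: "anti1 (p i) (q i)" by (simp add: acnt_def)
  show "i \<in> {..<n}"
  proof (rule ccontr)
    assume "i \<notin> {..<n}"
    then have "p i = (False, False)" using assms by (simp add: pauli_on_def)
    then show False using a by simp
  qed
qed

lemma acnt_sub2: "q \<in> pauli_on n \<Longrightarrow> acnt p q \<subseteq> {..<n}"
  by (subst acnt_sym) (rule acnt_sub)

lemma acnt_finite: "p \<in> pauli_on n \<Longrightarrow> finite (acnt p q)"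
  by (rule finite_subset[OF acnt_sub]) auto

lemma acnt_finite2: "q \<in> pauli_on n \<Longrightarrow> finite (acnt p q)"
  by (rule finite_subset[OF acnt_sub2]) auto

lemma acnt_pmul: "acnt (pmul p q) r = (acnt p r - acnt q r) \<union> (acnt q r - acnt p r)"
  by (auto simp: acnt_def pmul_def anti1_def)

lemma card_symdiff:
  assumes "finite A" "finite B"
  shows "card ((A - B) \<union> (B - A)) + 2 * card (A \<inter> B) = card A + card B"
proof -
  have "card ((A - B) \<union> (B - A)) = card (A - B) + card (B - A)"
    by (rule card_Un_disjoint) (use assms in auto)
  moreover have "card A = card (A - B) + card (A \<inter> B)"
    using assms by (metis Int_Diff_disjoint Int_commute Un_Diff_Int card_Un_disjoint finite_Diff finite_Int)
  moreover have "card B = card (B - A) + card (A \<inter> B)"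
    using assms by (metis Int_Diff_disjoint Int_commute Un_Diff_Int card_Un_disjoint finite_Diff finite_Int)
  ultimately show ?thesis by simp
qed

lemma commutes_pmul:
  assumes "finite (acnt p r)" "finite (acnt q r)"
  shows "commutes (pmul p q) r \<longleftrightarrow> (commutes p r \<longleftrightarrow> commutes q r)"
proof -
  have "card (acnt (pmul p q) r) + 2 * card (acnt p r \<inter> acnt q r) = card (acnt p r) + card (acnt q r)"
    unfolding acnt_pmul by (rule card_symdiff[OF assms])
  from arg_cong[where f=even, OF this] show ?thesis unfolding commutes_acnt by simp
qed

lemma pmul_comm: "pmul p q = pmul q p" by (auto simp: pmul_def)
lemma pmul_assoc: "pmul (pmul p q) r = pmul p (pmul q r)" by (auto simp: pmul_def)
lemma pmul_self[simp]: "pmul p p = pid" by (auto simp: pmul_def pid_def)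
lemma pmul_pid[simp]: "pmul p pid = p" "pmul pid p = p" by (auto simp: pmul_def pid_def)
lemma pmul_cancel: "pmul p (pmul p q) = q" by (auto simp: pmul_def fun_eq_iff prod_eq_iff)
lemma pmul_eq_pid: "pmul p q = pid \<longleftrightarrow> p = q"
  by (auto simp: pmul_def pid_def fun_eq_iff prod_eq_iff)
lemma pmul_app: "pmul p q i = (fst (p i) \<noteq> fst (q i), snd (p i) \<noteq> snd (q i))"
  unfolding pmul_def by (rule refl)
lemma pmul_inj: "pmul p q = pmul p r \<longleftrightarrow> q = r"
  by (metis pmul_cancel)

lemma pauli_on_pmul: "p \<in> pauli_on n \<Longrightarrow> q \<in> pauli_on n \<Longrightarrow> pmul p q \<in> pauli_on n"
  unfolding pauli_on_def pmul_def by simp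
lemma pid_pauli_on[simp]: "pid \<in> pauli_on n" by (simp add: pauli_on_def pid_def)
lemma pid_app[simp]: "pid i = (False, False)" by (simp add: pid_def)

lemma commutes_pid[simp]: "commutes pid q" "commutes q pid"
  by (auto simp: commutes_acnt acnt_def)
lemma commutes_self[simp]: "commutes p p"
  by (auto simp: commutes_acnt acnt_def)



lemma commutes_pmul2:
  assumes "finite (acnt p q)" "finite (acnt p r)"
  shows "commutes p (pmul q r) \<longleftrightarrow> (commutes p q \<longleftrightarrow> commutes p r)"
  using commutes_pmul[of q p r] assms by (simp add: commutes_sym acnt_sym)

lemma pauli_on_Suc:
  "pauli_on (Suc n) = (\<lambda>(p, v). p(n := v)) ` (pauli_on n \<times> UNIV)"
proof (intro set_eqI iffI)
  fix x assume x: "x \<in> pauli_on (Suc n)"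
  have "x = (\<lambda>(p, v). p(n := v)) (x(n := (False, False)), x n)" by auto
  moreover have "x(n := (False, False)) \<in> pauli_on n" using x by (auto simp: pauli_on_def)
  ultimately show "x \<in> (\<lambda>(p, v). p(n := v)) ` (pauli_on n \<times> UNIV)" by blast
next
  fix x assume "x \<in> (\<lambda>(p, v). p(n := v)) ` (pauli_on n \<times> UNIV)"
  then show "x \<in> pauli_on (Suc n)" by (auto simp: pauli_on_def)
qed

lemma inj_on_upd: "inj_on (\<lambda>(p, v). p(n := v)) (pauli_on n \<times> UNIV)"
proof (rule inj_onI, clarify)
  fix p v q w assume p: "p \<in> pauli_on n" and q: "q \<in> pauli_on n" and e: "p(n := v) = q(n := w)"
  have "v = w" using fun_cong[OF e, of n] by simp
  moreover have "p = q"
  proof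
    fix i show "p i = q i"
      using fun_cong[OF e, of i] p q by (cases "i = n") (auto simp: pauli_on_def)
  qed
  ultimately show "p = q \<and> v = w" by simp
qed

lemma card_UNIV_bb: "card (UNIV :: (bool \<times> bool) set) = 4"
proof -
  have e: "(UNIV :: (bool \<times> bool) set) = {(False,False),(False,True),(True,False),(True,True)}"
    by auto
  show ?thesis unfolding e by simp
qed

lemma pauli_on_fin: "finite (pauli_on n) \<and> card (pauli_on n) = 4 ^ n"
proof (induction n)
  case 0
  have "pauli_on 0 = {pid}" by (auto simp: pauli_on_def pid_def)
  then show ?case by simp
next
  case (Suc n)
  have f: "finite (pauli_on n \<times> (UNIV :: (bool \<times> bool) set))" using Suc by simp
  have "card (pauli_on (Suc n)) = card (pauli_on n \<times> (UNIV :: (bool \<times> bool) set))"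
    unfolding pauli_on_Suc by (rule card_image[OF inj_on_upd])
  also have "\<dots> = 4 ^ Suc n" using Suc by (simp add: card_cartesian_product card_UNIV_bb)
  finally show ?case using f pauli_on_Suc by simp
qed

lemma finite_pauli_on[simp]: "finite (pauli_on n)" using pauli_on_fin by blast
lemma card_pauli_on: "card (pauli_on n) = 4 ^ n" using pauli_on_fin by blast

lemma pauli_on_lt: "p \<in> pauli_on k \<Longrightarrow> p q \<noteq> (False, False) \<Longrightarrow> q < k"
  unfolding pauli_on_def using not_less by blast

definition single :: "nat \<Rightarrow> bool \<times> bool \<Rightarrow> pauli" where
  "single q v = (\<lambda>i. if i = q then v else (False, False))"

lemma single_pauli_on: "q < k \<Longrightarrow> single q v \<in> pauli_on k"
  by (auto simp: single_def pauli_on_def)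

lemma acnt_single: "acnt (single q v) g = (if anti1 v (g q) then {q} else {})"
  by (auto simp: acnt_def single_def)

lemma commutes_single: "commutes (single q v) g \<longleftrightarrow> \<not> anti1 v (g q)"
  by (simp add: commutes_acnt acnt_single)

lemma card_filter_sum: "finite A \<Longrightarrow> card {x\<in>A. P x} = (\<Sum>x\<in>A. if P x then 1 else 0)"
  by (simp add: sum.If_cases Int_def conj_commute)

lemma half_count:
  assumes fin: "finite A" and f: "\<And>x. x \<in> A \<Longrightarrow> f x \<in> A" and ff: "\<And>x. x \<in> A \<Longrightarrow> f (f x) = x"
    and sw: "\<And>x. x \<in> A \<Longrightarrow> P (f x) \<longleftrightarrow> \<not> P x"
  shows "2 * card {x\<in>A. \<not> P x} = card A"
proof -
  have "card {x\<in>A. P x} = card {x\<in>A. \<not> P x}"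
  proof (rule bij_betw_same_card[of f])
    show "bij_betw f {x \<in> A. P x} {x \<in> A. \<not> P x}"
      unfolding bij_betw_def
    proof
      show "inj_on f {x \<in> A. P x}" by (metis (no_types, lifting) ff inj_onI mem_Collect_eq)
      show "f ` {x \<in> A. P x} = {x \<in> A. \<not> P x}"
      proof (intro set_eqI iffI)
        fix y assume "y \<in> f ` {x \<in> A. P x}" then show "y \<in> {x \<in> A. \<not> P x}" using f sw by auto
      next
        fix y assume y: "y \<in> {x \<in> A. \<not> P x}"
        then have "f y \<in> {x \<in> A. P x}" using f sw by auto
        moreover have "y = f (f y)" using ff y by auto
        ultimately show "y \<in> f ` {x \<in> A. P x}" by blast
      qed
    qed
  qed
  moreover have "card {x\<in>A. P x} + card {x\<in>A. \<not> P x} = card A"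
  proof -
    have "card ({x\<in>A. P x} \<union> {x\<in>A. \<not> P x}) = card {x\<in>A. P x} + card {x\<in>A. \<not> P x}"
      by (rule card_Un_disjoint) (use fin in auto)
    moreover have "{x\<in>A. P x} \<union> {x\<in>A. \<not> P x} = A" by auto
    ultimately show ?thesis by simp
  qed
  ultimately show ?thesis by simp
qed

lemma perp_count:
  assumes G: "G \<subseteq> pauli_on k" and pidG: "pid \<in> G" and cl: "\<And>g h. g \<in> G \<Longrightarrow> h \<in> G \<Longrightarrow> pmul g h \<in> G"
  shows "card G * card {p \<in> pauli_on k. \<forall>g\<in>G. commutes p g} \<le> 4 ^ k"
proof -
  define P where "P = pauli_on k"
  define C where "C = {p \<in> P. \<forall>g\<in>G. commutes p g}"
  have finP: "finite P" by (simp add: P_def)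
  have finG: "finite G" by (rule finite_subset[OF G]) simp
  have CP: "C \<subseteq> P" by (auto simp: C_def)
  have finC: "finite C" by (rule finite_subset[OF CP finP])
  have fa: "\<And>p q. p \<in> P \<Longrightarrow> finite (acnt p q)" by (simp add: P_def acnt_finite)
  have one: "2 * card {p\<in>P. \<not> commutes p g} = (if g = pid then 0 else 4 ^ k)" if g: "g \<in> G" for g
  proof (cases "g = pid")
    case True then show ?thesis by simp
  next
    case False
    then obtain q where q: "g q \<noteq> (False, False)" by (auto simp: pid_def)
    have qk: "q < k" using q g G pauli_on_lt by blast
    define v where "v = (if fst (g q) then (False, True) else (True, False))"
    have av: "anti1 v (g q)" using q by (cases "g q") (auto simp: v_def anti1_def)
    define e where "e = single q v"
    have eP: "e \<in> P" using qk by (simp add: e_def P_def single_pauli_on)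
    have ne: "\<not> commutes e g" by (simp add: e_def commutes_single av)
    have "2 * card {p\<in>P. \<not> commutes p g} = card P"
    proof (rule half_count[OF finP, of "\<lambda>p. pmul p e"])
      show "\<And>x. x \<in> P \<Longrightarrow> pmul x e \<in> P" using eP by (simp add: P_def pauli_on_pmul)
      show "\<And>x. x \<in> P \<Longrightarrow> pmul (pmul x e) e = x" by (simp add: pmul_assoc)
      fix x assume "x \<in> P"
      then show "commutes (pmul x e) g = (\<not> commutes x g)"
        using commutes_pmul[OF fa[OF \<open>x \<in> P\<close>] fa[OF eP]] ne by simp
    qed
    then show ?thesis using False by (simp add: P_def card_pauli_on)
  qed
  have two: "2 * card {g\<in>G. \<not> commutes p g} = (if p \<in> C then 0 else card G)" if p: "p \<in> P" for p
  proof (cases "p \<in> C")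
    case True
    then have e: "{g\<in>G. \<not> commutes p g} = {}" by (auto simp: C_def)
    show ?thesis unfolding e using True by simp
  next
    case False
    then obtain g0 where g0: "g0 \<in> G" "\<not> commutes p g0" using p by (auto simp: C_def)
    have "2 * card {g\<in>G. \<not> commutes p g} = card G"
    proof (rule half_count[OF finG, of "\<lambda>g. pmul g g0"])
      show "\<And>x. x \<in> G \<Longrightarrow> pmul x g0 \<in> G" using g0 cl by blast
      show "\<And>x. x \<in> G \<Longrightarrow> pmul (pmul x g0) g0 = x" by (simp add: pmul_assoc)
      fix x assume "x \<in> G"
      show "commutes p (pmul x g0) = (\<not> commutes p x)"
        using commutes_pmul2[OF fa[OF p] fa[OF p]] g0(2) by simp
    qed
    then show ?thesis using False by simp
  qed
  have swap: "(\<Sum>g\<in>G. card {p\<in>P. \<not> commutes p g}) = (\<Sum>p\<in>P. card {g\<in>G. \<not> commutes p g})"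
    using finP finG by (simp add: card_filter_sum sum.swap[of _ G P])
  have "(\<Sum>g\<in>G. 2 * card {p\<in>P. \<not> commutes p g}) = (\<Sum>g\<in>G. if g = pid then 0 else 4 ^ k)"
    using one by (simp cong: sum.cong)
  also have "\<dots> = (card G - 1) * 4 ^ k"
  proof -
    have "(\<Sum>g\<in>G. if g = pid then 0 else (4::nat) ^ k) = (\<Sum>g\<in>G - {pid}. 4 ^ k)"
      using finG pidG by (simp add: sum.If_cases Diff_eq Int_commute)
    then show ?thesis using finG pidG by simp
  qed
  finally have e1: "2 * (\<Sum>g\<in>G. card {p\<in>P. \<not> commutes p g}) = (card G - 1) * 4 ^ k"
    by (simp add: sum_distrib_left)
  have "(\<Sum>p\<in>P. 2 * card {g\<in>G. \<not> commutes p g}) = (\<Sum>p\<in>P. if p \<in> C then 0 else card G)"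
    using two by (simp cong: sum.cong)
  also have "\<dots> = (\<Sum>p\<in>P - C. card G)"
    using finP CP by (simp add: sum.If_cases Diff_eq Int_commute)
  also have "\<dots> = (card P - card C) * card G"
    using finP CP finC by (simp add: card_Diff_subset)
  finally have e2: "2 * (\<Sum>p\<in>P. card {g\<in>G. \<not> commutes p g}) = (card P - card C) * card G"
    by (simp add: sum_distrib_left)
  have cP: "card P = 4 ^ k" by (simp add: P_def card_pauli_on)
  have cCP: "card C \<le> card P" by (rule card_mono[OF finP CP])
  have G1: "card G \<ge> 1" using pidG finG by (metis One_nat_def Suc_leI card_gt_0_iff empty_iff)
  have "(card G - 1) * 4 ^ k = (4 ^ k - card C) * card G" using e1 e2 swap cP by simp
  then have "int (card G - 1) * 4 ^ k = int (4 ^ k - card C) * int (card G)"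
    by (metis of_nat_mult of_nat_power of_nat_numeral)
  then have "(int (card G) - 1) * 4 ^ k = (4 ^ k - int (card C)) * int (card G)"
    using G1 cCP cP by (simp add: of_nat_diff)
  then have "int (card G) * int (card C) = 4 ^ k" by (simp add: algebra_simps)
  then have "card G * card C = 4 ^ k" by (metis of_nat_eq_iff of_nat_mult of_nat_numeral of_nat_power)
  then show ?thesis by (simp add: C_def P_def)
qed



definition lam :: "pauli \<Rightarrow> pauli \<Rightarrow> bool \<times> bool \<Rightarrow> pauli" where
  "lam xb zb v = pmul (if fst v then xb else pid) (if snd v then zb else pid)"

definition vadd :: "bool \<times> bool \<Rightarrow> bool \<times> bool \<Rightarrow> bool \<times> bool" where
  "vadd v w = (fst v \<noteq> fst w, snd v \<noteq> snd w)"

lemma lam_hom: "pmul (lam xb zb v) (lam xb zb w) = lam xb zb (vadd v w)"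
  by (auto simp: lam_def vadd_def pmul_def fun_eq_iff)

lemma lam_app: "lam xb zb v j = ((fst v \<and> fst (xb j)) \<noteq> (snd v \<and> fst (zb j)),
      (fst v \<and> snd (xb j)) \<noteq> (snd v \<and> snd (zb j)))"
  by (auto simp: lam_def pmul_def)

lemma lam_id[simp]: "lam xb zb (False, False) = pid"
  by (simp add: lam_def)

lemma vadd_self[simp]: "vadd v v = (False, False)" by (simp add: vadd_def)

lemma tau_lemma:
  assumes "tau \<noteq> (False, False)"
  shows "\<exists>v1 v2. v1 \<noteq> (False, False) \<and> v2 \<noteq> (False, False) \<and> anti1 tau v1 \<and> anti1 tau v2 \<and>
     (\<forall>a b. anti1 v1 a \<and> a \<noteq> tau \<and> anti1 v2 b \<and> b \<noteq> tau \<longrightarrow> vadd a b = tau)"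
proof -
  obtain x z where t: "tau = (x, z)" by fastforce
  show ?thesis
  proof (cases x)
    case True
    show ?thesis
    proof (cases z)
      case True
      show ?thesis using \<open>x\<close> True t
        by (intro exI[of _ "(True, False)"] exI[of _ "(False, True)"]) (auto simp: anti1_def vadd_def)
    next
      case False
      show ?thesis using \<open>x\<close> False t
        by (intro exI[of _ "(False, True)"] exI[of _ "(True, True)"]) (auto simp: anti1_def vadd_def)
    qed
  next
    case False
    then have z using assms t by auto
    show ?thesis using \<open>z\<close> False t
      by (intro exI[of _ "(True, False)"] exI[of _ "(True, True)"]) (auto simp: anti1_def vadd_def)
  qed
qed

lemma pmul_swap4: "pmul (pmul a s) (pmul b t) = pmul (pmul a b) (pmul s t)"
  by (auto simp: pmul_def fun_eq_iff)

lemma pmul_eq_swap: assumes "pmul a s = pmul b t" shows "pmul a b = pmul s t"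
proof -
  have "pmul (pmul a s) (pmul b t) = pid" using assms by (simp add: pmul_eq_pid)
  then have "pmul (pmul a b) (pmul s t) = pid" by (simp add: pmul_swap4)
  then show ?thesis by (simp add: pmul_eq_pid)
qed

locale inner =
  fixes k :: nat and S2 :: "pauli set" and d :: nat and xb zb :: pauli
  assumes code: "stab_code k S2 d" and d2: "d \<ge> 2"
    and xbN: "xb \<in> normaliser k S2" and zbN: "zb \<in> normaliser k S2"
    and xz: "\<not> commutes xb zb"
begin

lemma grp: "1 \<le> k" "S2 \<subseteq> pauli_on k" "pid \<in> S2" "\<And>p q. p \<in> S2 \<Longrightarrow> q \<in> S2 \<Longrightarrow> pmul p q \<in> S2"
  "\<And>p q. p \<in> S2 \<Longrightarrow> q \<in> S2 \<Longrightarrow> commutes p q" "card S2 = 2 ^ (k - 1)"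
  using code by (auto simp: stab_code_def stab_group_1_def)

lemma dist: "distance k S2 = d" using code by (simp add: stab_code_def)

lemma finS2: "finite S2" by (rule finite_subset[OF grp(2)]) simp

lemma xbP: "xb \<in> pauli_on k" and zbP: "zb \<in> pauli_on k"
  using xbN zbN by (auto simp: normaliser_def)

abbreviation L where "L \<equiv> lam xb zb"

lemma lamP: "L v \<in> pauli_on k"
  using xbP zbP by (auto simp: lam_def intro!: pauli_on_pmul)

lemma lam_comm_xb: "commutes (L v) xb \<longleftrightarrow> \<not> snd v"
proof -
  have "commutes (L v) xb \<longleftrightarrow> (commutes (if fst v then xb else pid) xb \<longleftrightarrow> commutes (if snd v then zb else pid) xb)"
    unfolding lam_def by (rule commutes_pmul) (use xbP zbP acnt_finite2 in blast)+
  then show ?thesis using xz commutes_sym by (auto)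
qed

lemma lam_comm_zb: "commutes (L v) zb \<longleftrightarrow> \<not> fst v"
proof -
  have "commutes (L v) zb \<longleftrightarrow> (commutes (if fst v then xb else pid) zb \<longleftrightarrow> commutes (if snd v then zb else pid) zb)"
    unfolding lam_def by (rule commutes_pmul) (use xbP zbP acnt_finite2 in blast)+
  then show ?thesis using xz commutes_sym by (auto)
qed

lemma comm_lam: "p \<in> pauli_on k \<Longrightarrow> commutes p (L v) \<longleftrightarrow>
   ((fst v \<longrightarrow> commutes p xb) \<longleftrightarrow> (snd v \<longrightarrow> commutes p zb))"
  unfolding lam_def
  by (subst commutes_pmul2) (auto intro: acnt_finite)

lemma lam_lam: "commutes (L v) (L w) \<longleftrightarrow> \<not> anti1 v w"
  using comm_lam[OF lamP, of v w] lam_comm_xb lam_comm_zb by (auto simp: anti1_def)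

lemma S2_comm_xb: "s \<in> S2 \<Longrightarrow> commutes s xb" and S2_comm_zb: "s \<in> S2 \<Longrightarrow> commutes s zb"
  using xbN zbN commutes_sym by (auto simp: normaliser_def)

lemma lamN: "L v \<in> normaliser k S2"
proof -
  have "commutes (L v) s" if "s \<in> S2" for s
  proof -
    have sP: "s \<in> pauli_on k" using that grp(2) by blast
    have "commutes s (L v)" using comm_lam[OF sP, of v] S2_comm_xb[OF that] S2_comm_zb[OF that] by simp
    then show ?thesis by (simp add: commutes_sym)
  qed
  then show ?thesis using lamP by (auto simp: normaliser_def)
qed

lemma lam_in_S2: "L v \<in> S2 \<Longrightarrow> v = (False, False)"
  using S2_comm_xb S2_comm_zb lam_comm_xb lam_comm_zb by (metis prod.collapse)

lemma N_comm_S2: "p \<in> normaliser k S2 \<Longrightarrow> s \<in> S2 \<Longrightarrow> commutes p s"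
  by (auto simp: normaliser_def)

lemma weight1:
  assumes q: "q < k" and v: "v \<noteq> (False, False)" and all: "\<And>u. u \<in> S2 \<Longrightarrow> \<not> anti1 v (u q)"
  shows "single q v \<in> S2"
proof (rule ccontr)
  assume nin: "single q v \<notin> S2"
  have sN: "single q v \<in> normaliser k S2"
    using single_pauli_on[OF q] all by (auto simp: normaliser_def commutes_single)
  have "supp (single q v) = {q}" using v by (auto simp: supp_def single_def)
  then have "1 \<in> (\<lambda>p. card (supp p)) ` (normaliser k S2 - S2)" using sN nin
    by (intro image_eqI[of _ _ "single q v"]) auto
  moreover have "finite ((\<lambda>p. card (supp p)) ` (normaliser k S2 - S2))"
    by (rule finite_imageI, rule finite_subset[of _ "pauli_on k"]) (auto simp: normaliser_def)
  ultimately have "distance k S2 \<le> 1" unfolding distance_def by (meson Min_le)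
  then show False using dist d2 by simp
qed

lemma exists_u0:
  assumes p: "p \<in> normaliser k S2"
  shows "\<exists>u0\<in>S2. u0 q = p q"
proof (cases "p q = (False, False)")
  case True then show ?thesis using grp(3) by (intro bexI[of _ pid]) auto
next
  case False
  have pP: "p \<in> pauli_on k" using p by (simp add: normaliser_def)
  then have q: "q < k" using False pauli_on_lt by blast
  show ?thesis
  proof (rule ccontr)
    assume none: "\<not> ?thesis"
    have ex: "\<exists>u\<in>S2. anti1 v (u q)" if v: "v \<noteq> (False, False)" "anti1 (p q) v" for v
    proof (rule ccontr)
      assume "\<not> ?thesis"
      then have "single q v \<in> S2" using weight1[OF q v(1)] by blast
      then have "commutes p (single q v)" using N_comm_S2[OF p] by blast
      then show False using v(2) by (simp add: commutes_sym[of p] commutes_single anti1_sym)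
    qed
    obtain v1 v2 where vv: "v1 \<noteq> (False, False)" "v2 \<noteq> (False, False)" "anti1 (p q) v1" "anti1 (p q) v2"
      "\<And>a b. anti1 v1 a \<and> a \<noteq> p q \<and> anti1 v2 b \<and> b \<noteq> p q \<Longrightarrow> vadd a b = p q"
      using tau_lemma[OF False] by blast
    obtain u1 where u1: "u1 \<in> S2" "anti1 v1 (u1 q)" using ex vv by blast
    obtain u2 where u2: "u2 \<in> S2" "anti1 v2 (u2 q)" using ex vv by blast
    have "vadd (u1 q) (u2 q) = p q" using vv(5) u1 u2 none by blast
    then have "pmul u1 u2 q = p q" by (simp add: vadd_def pmul_def)
    then show False using none grp(4) u1 u2 by blast
  qed
qed

lemma count_coset:
  assumes p: "p \<in> normaliser k S2"
  shows "4 * card {u\<in>S2. pmul p u q \<noteq> (False, False)} \<le> 3 * card S2"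
proof -
  obtain u0 where u0: "u0 \<in> S2" "u0 q = p q" using exists_u0[OF p] by blast
  define E where "E = {u\<in>S2. u q = p q}"
  have fE: "finite E" using finS2 by (simp add: E_def)
  have part: "card {u\<in>S2. u q = v} \<le> card E" for v
  proof (cases "\<exists>s. s \<in> S2 \<and> s q = v")
    case True
    then obtain s where s: "s \<in> S2" "s q = v" by blast
    have "inj_on (\<lambda>u. pmul u (pmul s u0)) {u\<in>S2. u q = v}"
      by (rule inj_onI) (simp add: pmul_comm[of _ "pmul s u0"] pmul_inj)
    moreover have "(\<lambda>u. pmul u (pmul s u0)) ` {u\<in>S2. u q = v} \<subseteq> E"
    proof (rule image_subsetI)
      fix u assume u: "u \<in> {u\<in>S2. u q = v}"
      have "pmul u (pmul s u0) \<in> S2" using u s u0 by (intro grp(4)) auto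
      moreover have "pmul u (pmul s u0) q = p q" using u s u0 by (auto simp: pmul_app prod_eq_iff)
      ultimately show "pmul u (pmul s u0) \<in> E" by (simp add: E_def)
    qed
    ultimately show ?thesis by (rule card_inj_on_le[OF _ _ fE])
  next
    case False then have e: "{u\<in>S2. u q = v} = {}" by auto
    show ?thesis unfolding e by simp
  qed
  have "card S2 = card (\<Union>v\<in>UNIV. {u\<in>S2. u q = v})" by (rule arg_cong[where f=card]) auto
  also have "\<dots> = (\<Sum>v\<in>UNIV. card {u\<in>S2. u q = v})"
    by (rule card_UN_disjoint) (use finS2 in auto)
  also have "\<dots> \<le> (\<Sum>v\<in>(UNIV::(bool\<times>bool) set). card E)" by (rule sum_mono) (rule part)
  also have "\<dots> = 4 * card E" by (simp add: card_UNIV_bb)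
  finally have cS: "card S2 \<le> 4 * card E" .
  have eq: "{u\<in>S2. pmul p u q \<noteq> (False, False)} = S2 - E"
    by (auto simp: E_def pmul_def prod_eq_iff)
  have "card (S2 - E) = card S2 - card E" by (rule card_Diff_subset) (use fE in \<open>auto simp: E_def\<close>)
  moreover have "card E \<le> card S2" using finS2 by (auto simp: E_def intro: card_mono)
  ultimately show ?thesis unfolding eq using cS by linarith
qed

lemma N_in_S2:
  assumes w: "w \<in> normaliser k S2" and wx: "commutes w xb" and wz: "commutes w zb"
  shows "w \<in> S2"
proof (rule ccontr)
  assume nw: "w \<notin> S2"
  define G where "G = {pmul (L v) s | v s. s \<in> S2}"
  have Gim: "G = (\<lambda>(v, s). pmul (L v) s) ` (UNIV \<times> S2)" by (auto simp: G_def)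
  have GP: "G \<subseteq> pauli_on k" using lamP grp(2) by (auto simp: G_def intro!: pauli_on_pmul)
  have "pmul (L (False, False)) pid \<in> G" unfolding G_def using grp(3) by blast
  then have pidG: "pid \<in> G" by simp
  have clG: "pmul g h \<in> G" if gG: "g \<in> G" and hG: "h \<in> G" for g h
  proof -
    obtain v s w' t where g: "g = pmul (L v) s" "s \<in> S2" and h: "h = pmul (L w') t" "t \<in> S2"
      using gG hG unfolding G_def by blast
    have "pmul g h = pmul (pmul (L v) (L w')) (pmul s t)"
      unfolding g h by (rule pmul_swap4)
    also have "\<dots> = pmul (L (vadd v w')) (pmul s t)" by (simp add: lam_hom)
    finally show ?thesis unfolding G_def using grp(4)[OF g(2) h(2)] by blast
  qed
  have inj: "inj_on (\<lambda>(v, s). pmul (L v) s) (UNIV \<times> S2)"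
  proof (rule inj_onI, clarify)
    fix v s v' s' assume s: "s \<in> S2" "s' \<in> S2" and e: "pmul (L v) s = pmul (L v') s'"
    have "pmul (L v) (L v') = pmul s s'"
      using e by (rule pmul_eq_swap)
    then have "L (vadd v v') \<in> S2" using lam_hom grp(4) s by metis
    then have "vadd v v' = (False, False)" by (rule lam_in_S2)
    then have vv: "v = v'" by (auto simp: vadd_def prod_eq_iff)
    then show "v = v' \<and> s = s'" using e pmul_inj by auto
  qed
  have cG: "card G = 4 * card S2"
    unfolding Gim using card_image[OF inj] by (simp add: card_cartesian_product card_UNIV_bb)
  define C where "C = {p \<in> pauli_on k. \<forall>g\<in>G. commutes p g}"
  have commG: "commutes p g" if p: "p \<in> pauli_on k" "commutes p xb" "commutes p zb" "\<And>s. s \<in> S2 \<Longrightarrow> commutes p s"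
     and g: "g \<in> G" for p g
  proof -
    obtain v s where gs: "g = pmul (L v) s" "s \<in> S2" using g unfolding G_def by blast
    have "commutes p (L v)" using comm_lam[OF p(1)] p by auto
    moreover have "commutes p s" using p gs by auto
    ultimately show ?thesis unfolding gs(1)
      by (subst commutes_pmul2) (use p(1) acnt_finite in auto)
  qed
  have sub: "insert w S2 \<subseteq> C"
  proof
    fix p assume "p \<in> insert w S2"
    then show "p \<in> C"
    proof
      assume "p = w" then show ?thesis using w wx wz commG by (auto simp: C_def normaliser_def)
    next
      assume ps: "p \<in> S2"
      then show ?thesis using grp S2_comm_xb S2_comm_zb commG[of p] by (auto simp: C_def)
    qed
  qed
  have fC: "finite C" by (simp add: C_def)
  have "card (insert w S2) \<le> card C" by (rule card_mono[OF fC sub])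
  then have cC: "card S2 + 1 \<le> card C" using nw finS2 by simp
  have "card G * card C \<le> 4 ^ k" using perp_count[OF GP pidG clG] by (simp add: C_def)
  moreover have "card G * card C \<ge> 4 * card S2 * (card S2 + 1)" unfolding cG using cC by (intro mult_le_mono2)
  moreover have "4 * card S2 * card S2 = 4 ^ k"
  proof -
    have "4 * 2 ^ (k - 1) * 2 ^ (k - 1) = (2::nat) ^ (2 + (k - 1) + (k - 1))" by (simp add: power_add)
    also have "2 + (k - 1) + (k - 1) = 2 * k" using grp(1) by simp
    finally show ?thesis using grp(6) by (simp add: power_mult)
  qed
  moreover have "card S2 \<ge> 1" using grp(3) finS2 by (metis One_nat_def Suc_leI card_gt_0_iff empty_iff)
  ultimately show False by (simp add: algebra_simps)
qed

end



lemma enc_lam: "enc k xb zb p a = lam xb zb (p (a div k)) (a mod k)"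
  by (simp add: enc_def lam_app Let_def)

lemma enc_hom: "pmul (enc k xb zb p) (enc k xb zb q) = enc k xb zb (pmul p q)"
  by (auto simp: enc_def pmul_def Let_def fun_eq_iff)

lemma enc_pid[simp]: "enc k xb zb pid = pid"
  by (simp add: enc_def pid_def Let_def fun_eq_iff)

lemma block_pmul: "block k i (pmul P Q) = pmul (block k i P) (block k i Q)"
  by (auto simp: block_def pmul_def fun_eq_iff)

lemma block_pid[simp]: "block k i pid = pid"
  by (simp add: block_def fun_eq_iff)

lemma block_pauli_on: "block k i P \<in> pauli_on k"
  by (simp add: block_def pauli_on_def)


lemma parity_sum:
  assumes "finite I"
  shows "even (\<Sum>i\<in>I. f i :: nat) \<longleftrightarrow> even (card {i\<in>I. odd (f i)})"
  using assms
proof (induction I rule: finite_induct)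
  case empty then show ?case by simp
next
  case (insert x F)
  have e: "{i \<in> insert x F. odd (f i)} = (if odd (f x) then insert x {i\<in>F. odd (f i)} else {i\<in>F. odd (f i)})"
    by auto
  have "x \<notin> {i\<in>F. odd (f i)}" using insert by simp
  moreover have "finite {i\<in>F. odd (f i)}" using insert by simp
  ultimately show ?case using insert unfolding e by auto
qed

lemma acnt_blocks:
  fixes k m :: nat
  assumes k: "0 < k" and P: "P \<in> pauli_on (m * k)"
  shows "card (acnt P Q) = (\<Sum>i<m. card (acnt (block k i P) (block k i Q)))"
proof -
  have eq: "acnt P Q = (\<Union>i<m. (\<lambda>j. i * k + j) ` acnt (block k i P) (block k i Q))"
  proof (intro set_eqI iffI)
    fix a assume a: "a \<in> acnt P Q"
    then have "a < m * k" using acnt_sub[OF P] by blast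
    then have im: "a div k < m" using k by (simp add: div_less_iff_less_mult)
    have "a mod k < k" using k by simp
    moreover have "a div k * k + a mod k = a" by simp
    ultimately have "a mod k \<in> acnt (block k (a div k) P) (block k (a div k) Q)"
      using a by (simp add: acnt_def block_def)
    then have "a \<in> (\<lambda>j. (a div k) * k + j) ` acnt (block k (a div k) P) (block k (a div k) Q)"
      by (intro image_eqI[of _ _ "a mod k"]) simp_all
    then show "a \<in> (\<Union>i<m. (\<lambda>j. i * k + j) ` acnt (block k i P) (block k i Q))" using im by blast
  next
    fix a assume "a \<in> (\<Union>i<m. (\<lambda>j. i * k + j) ` acnt (block k i P) (block k i Q))"
    then obtain i j where "a = i * k + j" "j \<in> acnt (block k i P) (block k i Q)" by blast
    then show "a \<in> acnt P Q"
      by (auto simp: acnt_def block_def split: if_splits)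
  qed
  have "card (acnt P Q) = (\<Sum>i<m. card ((\<lambda>j. i * k + j) ` acnt (block k i P) (block k i Q)))"
    unfolding eq
  proof (rule card_UN_disjoint)
    show "finite {..<m}" by simp
    show "\<forall>i\<in>{..<m}. finite ((\<lambda>j. i * k + j) ` acnt (block k i P) (block k i Q))"
      using acnt_finite[OF block_pauli_on] by blast
    show "\<forall>i\<in>{..<m}. \<forall>j\<in>{..<m}. i \<noteq> j \<longrightarrow>
      (\<lambda>j. i * k + j) ` acnt (block k i P) (block k i Q) \<inter> (\<lambda>ja. j * k + ja) ` acnt (block k j P) (block k j Q) = {}"
    proof (intro ballI impI)
      fix i i' :: nat assume "i \<noteq> i'"
      have "x \<in> acnt (block k i P) (block k i Q) \<Longrightarrow> x < k" for x i :: nat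
        using acnt_sub[OF block_pauli_on] by blast
      then have "i * k + x \<noteq> i' * k + y" if "x \<in> acnt (block k i P) (block k i Q)"
        "y \<in> acnt (block k i' P) (block k i' Q)" for x y
        using that \<open>i \<noteq> i'\<close> k by (metis add.commute div_mult_self1 div_less add_0 less_numeral_extra(3) not_gr0)
      then show "(\<lambda>j. i * k + j) ` acnt (block k i P) (block k i Q) \<inter> (\<lambda>ja. i' * k + ja) ` acnt (block k i' P) (block k i' Q) = {}"
        by blast
    qed
  qed
  also have "\<dots> = (\<Sum>i<m. card (acnt (block k i P) (block k i Q)))"
    by (rule sum.cong) (auto intro!: card_image inj_onI)
  finally show ?thesis .
qed



locale concat = inner +
  fixes m :: nat and T :: "pauli set"
  assumes m1: "1 \<le> m" and TP: "T \<subseteq> pauli_on m" and pidT: "pid \<in> T"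
    and clT: "\<And>g h. g \<in> T \<Longrightarrow> h \<in> T \<Longrightarrow> pmul g h \<in> T"
begin

abbreviation E where "E \<equiv> enc k xb zb"

definition T2 where "T2 = concat_stab m T k S2 xb zb"

lemma k0: "0 < k" using grp(1) by simp

lemma T2_mem: "x \<in> T2 \<longleftrightarrow> (\<exists>s t. x = pmul (E s) t \<and> s \<in> T \<and> t \<in> pauli_on (m * k) \<and> (\<forall>i<m. block k i t \<in> S2))"
  by (auto simp: T2_def concat_stab_def)

lemma lam_out: "j \<ge> k \<Longrightarrow> L v j = (False, False)"
  using lamP[of v] by (simp add: pauli_on_def)

lemma S2_out: "u \<in> S2 \<Longrightarrow> j \<ge> k \<Longrightarrow> u j = (False, False)"
  using grp(2) by (auto simp: pauli_on_def)

lemma block_enc: "block k i (E p) = L (p i)"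
proof
  fix j show "block k i (E p) j = L (p i) j"
  proof (cases "j < k")
    case True
    then have "(i * k + j) div k = i" "(i * k + j) mod k = j" using k0 by simp_all
    then show ?thesis using True by (simp add: block_def enc_lam)
  next
    case False then show ?thesis by (simp add: block_def lam_out)
  qed
qed

lemma encP: assumes "p \<in> pauli_on m" shows "E p \<in> pauli_on (m * k)"
  unfolding pauli_on_def
proof (intro CollectI allI impI)
  fix a assume "m * k \<le> a"
  then have "(m * k) div k \<le> a div k" by (rule div_le_mono)
  then have "m \<le> a div k" using k0 by simp
  then have "p (a div k) = (False, False)" using assms by (simp add: pauli_on_def)
  then show "E p a = (False, False)" by (simp add: enc_lam)
qed

lemma pid_blocks: "\<forall>i<m. block k i pid \<in> S2" using grp(3) by simp

lemma E_T2: "s \<in> T \<Longrightarrow> E s \<in> T2"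
  unfolding T2_mem using pid_blocks by (intro exI[of _ s] exI[of _ pid]) simp

lemma T2P: "T2 \<subseteq> pauli_on (m * k)"
proof
  fix x assume "x \<in> T2"
  then obtain s t where x: "x = pmul (E s) t" "s \<in> T" "t \<in> pauli_on (m * k)" unfolding T2_mem by blast
  then show "x \<in> pauli_on (m * k)" using TP encP pauli_on_pmul by blast
qed

lemma pidT2: "pid \<in> T2" using E_T2[OF pidT] by simp

lemma clT2: assumes "x \<in> T2" "y \<in> T2" shows "pmul x y \<in> T2"
proof -
  obtain s t where x: "x = pmul (E s) t" "s \<in> T" "t \<in> pauli_on (m * k)" "\<forall>i<m. block k i t \<in> S2"
    using assms(1) unfolding T2_mem by blast
  obtain s' t' where y: "y = pmul (E s') t'" "s' \<in> T" "t' \<in> pauli_on (m * k)" "\<forall>i<m. block k i t' \<in> S2"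
    using assms(2) unfolding T2_mem by blast
  have "pmul x y = pmul (E (pmul s s')) (pmul t t')"
    unfolding x(1) y(1) by (subst pmul_swap4) (simp add: enc_hom)
  moreover have "\<forall>i<m. block k i (pmul t t') \<in> S2" using x(4) y(4) grp(4) by (simp add: block_pmul)
  ultimately show ?thesis unfolding T2_mem using clT[OF x(2) y(2)] pauli_on_pmul[OF x(3) y(3)] by blast
qed

definition dec :: "pauli \<Rightarrow> pauli" where
  "dec P = (\<lambda>i. if i < m then (\<not> commutes (block k i P) zb, \<not> commutes (block k i P) xb) else (False, False))"

lemma decP: "dec P \<in> pauli_on m" by (simp add: dec_def pauli_on_def)

lemma dec_anti: "i < m \<Longrightarrow> \<not> commutes (block k i P) (L v) \<longleftrightarrow> anti1 (dec P i) v"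
  using comm_lam[OF block_pauli_on, of i P v] by (auto simp: dec_def anti1_def)

lemma comm_enc: assumes P: "P \<in> pauli_on (m * k)" shows "commutes P (E s) \<longleftrightarrow> commutes (dec P) s"
proof -
  have "card (acnt P (E s)) = (\<Sum>i<m. card (acnt (block k i P) (L (s i))))"
    using acnt_blocks[OF k0 P] by (simp add: block_enc)
  then have "commutes P (E s) \<longleftrightarrow> even (card {i\<in>{..<m}. odd (card (acnt (block k i P) (L (s i))))})"
    unfolding commutes_acnt by (simp add: parity_sum)
  also have "{i\<in>{..<m}. odd (card (acnt (block k i P) (L (s i))))} = acnt (dec P) s"
  proof (intro set_eqI iffI)
    fix i assume "i \<in> {i\<in>{..<m}. odd (card (acnt (block k i P) (L (s i))))}"
    then have "i < m" "\<not> commutes (block k i P) (L (s i))" by (auto simp: commutes_acnt)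
    then show "i \<in> acnt (dec P) s" using dec_anti by (simp add: acnt_def)
  next
    fix i assume i: "i \<in> acnt (dec P) s"
    then have im: "i < m" using acnt_sub[OF decP] by blast
    then have "\<not> commutes (block k i P) (L (s i))" using dec_anti i by (simp add: acnt_def)
    then show "i \<in> {i\<in>{..<m}. odd (card (acnt (block k i P) (L (s i))))}" using im by (simp add: commutes_acnt)
  qed
  finally show ?thesis by (simp add: commutes_acnt)
qed

lemma dec_hom: "dec (pmul P Q) = pmul (dec P) (dec Q)"
proof
  fix i
  have f: "finite (acnt (block k i X) Y)" for X Y using acnt_finite[OF block_pauli_on] .
  show "dec (pmul P Q) i = pmul (dec P) (dec Q) i"
    by (auto simp: dec_def block_pmul commutes_pmul[OF f f] pmul_app)
qed

lemma dec_S2: "\<forall>i<m. block k i t \<in> S2 \<Longrightarrow> dec t = pid"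
  using S2_comm_xb S2_comm_zb by (auto simp: dec_def fun_eq_iff)

lemma dec_enc: "p \<in> pauli_on m \<Longrightarrow> dec (E p) = p"
  by (auto simp: dec_def fun_eq_iff block_enc lam_comm_zb lam_comm_xb pauli_on_def)

lemma dec_T2: "x \<in> T2 \<Longrightarrow> dec x \<in> T"
proof -
  assume "x \<in> T2"
  then obtain s t where x: "x = pmul (E s) t" "s \<in> T" "\<forall>i<m. block k i t \<in> S2" unfolding T2_mem by blast
  have "dec x = s" unfolding x(1) dec_hom dec_S2[OF x(3)] using dec_enc x(2) TP by auto
  then show ?thesis using x(2) by simp
qed

definition emb :: "nat \<Rightarrow> pauli \<Rightarrow> pauli" where
  "emb i u = (\<lambda>a. if i * k \<le> a \<and> a < i * k + k then u (a - i * k) else (False, False))"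

lemma blk_disj: assumes "j < k" "i' \<noteq> i" shows "\<not> (i * k \<le> i' * k + j \<and> i' * k + j < i * k + k)"
proof
  assume h: "i * k \<le> i' * k + j \<and> i' * k + j < i * k + k"
  show False
  proof (cases "i' < i")
    case True
    then have "Suc i' * k \<le> i * k" by (intro mult_le_mono1) simp
    then show False using h assms by simp
  next
    case False
    then have "Suc i * k \<le> i' * k" using assms by (intro mult_le_mono1) simp
    then show False using h by simp
  qed
qed

lemma block_emb: assumes u: "u \<in> pauli_on k" shows "block k i' (emb i u) = (if i' = i then u else pid)"
proof
  fix j show "block k i' (emb i u) j = (if i' = i then u else pid) j"
  proof (cases "j < k")
    case True then show ?thesis using blk_disj[OF True] by (auto simp: block_def emb_def)
  next
    case False then show ?thesis using u by (auto simp: block_def emb_def pauli_on_def)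
  qed
qed

lemma embP: assumes "i < m" shows "emb i u \<in> pauli_on (m * k)"
proof -
  have "Suc i * k \<le> m * k" using assms by (intro mult_le_mono1) simp
  then show ?thesis by (auto simp: emb_def pauli_on_def)
qed

lemma emb_T2: assumes "i < m" "u \<in> S2" shows "emb i u \<in> T2"
proof -
  have "\<forall>i'<m. block k i' (emb i u) \<in> S2" using assms grp by (simp add: block_emb subsetD)
  then show ?thesis unfolding T2_mem using embP[OF assms(1)] pidT by (intro exI[of _ pid] exI[of _ "emb i u"]) simp
qed

lemma comm_emb: assumes P: "P \<in> pauli_on (m * k)" and i: "i < m" and u: "u \<in> pauli_on k"
  shows "commutes P (emb i u) \<longleftrightarrow> commutes (block k i P) u"
proof -
  have "card (acnt P (emb i u)) = (\<Sum>i'<m. card (acnt (block k i' P) (block k i' (emb i u))))"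
    by (rule acnt_blocks[OF k0 P])
  also have "\<dots> = (\<Sum>i'<m. if i' = i then card (acnt (block k i P) u) else 0)"
    by (rule sum.cong) (auto simp: block_emb[OF u] acnt_def)
  also have "\<dots> = card (acnt (block k i P) u)" using i by simp
  finally show ?thesis by (simp add: commutes_acnt)
qed

lemma decomp:
  assumes p: "p \<in> normaliser (m * k) T2"
  shows "dec p \<in> normaliser m T" "\<And>i. i < m \<Longrightarrow> block k i (pmul p (E (dec p))) \<in> S2"
proof -
  have pP: "p \<in> pauli_on (m * k)" using p by (simp add: normaliser_def)
  have pc: "\<And>x. x \<in> T2 \<Longrightarrow> commutes p x" using p by (simp add: normaliser_def)
  show "dec p \<in> normaliser m T"
    using decP pc[OF E_T2] comm_enc[OF pP] by (auto simp: normaliser_def)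
  fix i assume i: "i < m"
  have "commutes (block k i p) u" if u: "u \<in> S2" for u
  proof -
    have uP: "u \<in> pauli_on k" using u grp(2) by blast
    show ?thesis using pc[OF emb_T2[OF i u]] comm_emb[OF pP i uP] by simp
  qed
  then have bN: "block k i p \<in> normaliser k S2"
    using block_pauli_on by (auto simp: normaliser_def)
  define w where "w = block k i (pmul p (E (dec p)))"
  have w: "w = pmul (block k i p) (L (dec p i))" by (simp add: w_def block_pmul block_enc)
  have f: "finite (acnt (block k i X) Y)" for X Y using acnt_finite[OF block_pauli_on] .
  have fL: "finite (acnt (L v) Y)" for v Y using acnt_finite[OF lamP] .
  have wP: "w \<in> pauli_on k" unfolding w by (rule pauli_on_pmul[OF block_pauli_on lamP])
  have "commutes w s" if s: "s \<in> S2" for s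
    unfolding w using N_comm_S2[OF bN s] N_comm_S2[OF lamN s] by (simp add: commutes_pmul[OF f fL])
  then have wN: "w \<in> normaliser k S2" using wP by (simp add: normaliser_def)
  have "commutes w xb" unfolding w commutes_pmul[OF f fL] lam_comm_xb using i by (simp add: dec_def)
  moreover have "commutes w zb" unfolding w commutes_pmul[OF f fL] lam_comm_zb using i by (simp add: dec_def)
  ultimately show "block k i (pmul p (E (dec p))) \<in> S2" using N_in_S2[OF wN] by (simp add: w_def)
qed

lemma dec_notin:
  assumes p: "p \<in> normaliser (m * k) T2 - T2"
  shows "dec p \<in> normaliser m T - T"
proof -
  have pP: "p \<in> pauli_on (m * k)" using p by (simp add: normaliser_def)
  have "dec p \<notin> T"
  proof
    assume dT: "dec p \<in> T"
    define t where "t = pmul p (E (dec p))"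
    have tP: "t \<in> pauli_on (m * k)" unfolding t_def using pP encP[OF decP] by (rule pauli_on_pmul)
    have "p = pmul (E (dec p)) t" by (simp add: t_def pmul_comm[of p] pmul_cancel)
    then have "p \<in> T2" unfolding T2_mem using dT tP decomp(2)[of p] p by (auto simp: t_def)
    then show False using p by simp
  qed
  then show ?thesis using decomp(1)[of p] p by simp
qed

lemma enc_notin:
  assumes p': "p' \<in> normaliser m T - T"
  shows "E p' \<in> normaliser (m * k) T2 - T2"
proof -
  have p'P: "p' \<in> pauli_on m" using p' by (simp add: normaliser_def)
  have eP: "E p' \<in> pauli_on (m * k)" by (rule encP[OF p'P])
  have "commutes (E p') x" if x: "x \<in> T2" for x
  proof -
    obtain s t where st: "x = pmul (E s) t" "s \<in> T" "t \<in> pauli_on (m * k)" "\<forall>i<m. block k i t \<in> S2"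
      using x unfolding T2_mem by blast
    have c1: "commutes (E p') (E s)" using comm_enc[OF eP] dec_enc[OF p'P] p' st(2) by (simp add: normaliser_def)
    have "card (acnt (E p') t) = (\<Sum>i<m. card (acnt (L (p' i)) (block k i t)))"
      using acnt_blocks[OF k0 eP] by (simp add: block_enc)
    moreover have "even (card (acnt (L (p' i)) (block k i t)))" if "i < m" for i
      using N_comm_S2[OF lamN] st(4) that by (simp add: commutes_acnt)
    ultimately have c2: "commutes (E p') t" unfolding commutes_acnt by (auto intro!: dvd_sum)
    show ?thesis unfolding st(1)
      by (subst commutes_pmul2) (use eP acnt_finite c1 c2 in auto)
  qed
  then have "E p' \<in> normaliser (m * k) T2" using eP by (simp add: normaliser_def)
  moreover have "E p' \<notin> T2" using dec_T2 dec_enc[OF p'P] p' by force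
  ultimately show ?thesis by simp
qed

end



lemma xor_id: "pmul p (pmul b (pmul (pmul p a) c)) = pmul (pmul a b) c"
  by (auto simp: pmul_def fun_eq_iff)

context concat
begin

definition c2 where "c2 = 3 * card S2 div 4"

lemma k2: "2 \<le> k"
proof (rule ccontr)
  assume "\<not> 2 \<le> k"
  then have k1: "k = 1" using grp(1) by simp
  then have "card S2 = 1" using grp(6) by simp
  then have S2e: "S2 = {pid}" using grp(3) by (metis card_1_singletonE singletonD)
  have "single 0 (True, False) \<in> S2"
    by (rule weight1) (use k1 S2e in auto)
  then have "single 0 (True, False) 0 = pid 0" using S2e by simp
  then show False by (simp add: single_def)
qed

lemma cS2: "2 \<le> card S2"
proof -
  have "(2::nat) ^ 1 \<le> 2 ^ (k - 1)" using k2 by (intro power_increasing) auto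
  then show ?thesis using grp(6) by simp
qed

lemma c2_pos: "1 \<le> c2" using cS2 by (simp add: c2_def)

lemma c2_ratio: "4 / 3 \<le> real (card S2) / real c2"
proof -
  have "4 * c2 \<le> 3 * card S2" by (simp add: c2_def)
  then have "4 * real c2 \<le> 3 * real (card S2)" by (metis of_nat_le_iff of_nat_mult of_nat_numeral)
  moreover have "0 < real c2" using c2_pos by simp
  ultimately show ?thesis by (simp add: field_simps)
qed

lemma count_le_c2: "card {u\<in>S2. pmul (L v) u j \<noteq> (False, False)} \<le> c2"
proof -
  have "4 * card {u\<in>S2. pmul (L v) u j \<noteq> (False, False)} \<le> 3 * card S2" by (rule count_coset[OF lamN])
  then have "(4 * card {u\<in>S2. pmul (L v) u j \<noteq> (False, False)}) div 4 \<le> 3 * card S2 div 4" by (rule div_le_mono)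
  then show ?thesis by (simp add: c2_def)
qed

definition tt :: "pauli \<Rightarrow> pauli \<Rightarrow> pauli" where
  "tt r u = (\<lambda>a. if a < m * k \<and> r (a div k) \<noteq> (False, False) then u (a mod k) else (False, False))"

definition rep :: "pauli \<Rightarrow> pauli \<Rightarrow> pauli" where
  "rep r u = pmul (E r) (tt r u)"

lemma ttP: "tt r u \<in> pauli_on (m * k)" by (simp add: tt_def pauli_on_def)

lemma block_tt: assumes u: "u \<in> pauli_on k" and i: "i < m"
  shows "block k i (tt r u) = (if r i \<noteq> (False, False) then u else pid)"
proof
  fix j show "block k i (tt r u) j = (if r i \<noteq> (False, False) then u else pid) j"
  proof (cases "j < k")
    case True
    have "Suc i * k \<le> m * k" using i by (intro mult_le_mono1) simp
    then have lt: "i * k + j < m * k" using True by simp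
    have "(i * k + j) div k = i" "(i * k + j) mod k = j" using True k0 by simp_all
    then show ?thesis using True lt by (simp add: block_def tt_def)
  next
    case False then show ?thesis using u by (simp add: block_def pauli_on_def)
  qed
qed

lemma block_rep: "u \<in> pauli_on k \<Longrightarrow> i < m \<Longrightarrow>
    block k i (rep r u) = pmul (L (r i)) (if r i \<noteq> (False, False) then u else pid)"
  by (simp add: rep_def block_pmul block_enc block_tt)

lemma rep_val: assumes "a < m * k" shows "rep r u a = block k (a div k) (rep r u) (a mod k)"
proof -
  have "a mod k < k" using k0 by simp
  then show ?thesis by (simp add: block_def)
qed

lemma rep_out: assumes "r \<in> pauli_on m" "m * k \<le> a" shows "rep r u a = (False, False)"
proof -
  have "rep r u \<in> pauli_on (m * k)" unfolding rep_def by (rule pauli_on_pmul[OF encP[OF assms(1)] ttP])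
  then show ?thesis using assms(2) by (simp add: pauli_on_def)
qed

lemma reps:
  assumes p: "p \<in> normaliser (m * k) T2 - T2"
    and R'L: "R' \<subseteq> pmul (dec p) ` T" and R'f: "finite R'" and R'd: "c_disjoint c' R'"
  shows "\<exists>R \<subseteq> pmul p ` T2. finite R \<and> card R = card R' * card S2 \<and> c_disjoint (c' * c2) R"
proof -
  define p' where "p' = dec p"
  have p'N: "p' \<in> normaliser m T - T" unfolding p'_def by (rule dec_notin[OF p])
  have pP: "p \<in> pauli_on (m * k)" using p by (simp add: normaliser_def)
  have p'P: "p' \<in> pauli_on m" by (simp add: p'_def decP)
  have R'P: "r \<in> pauli_on m" "r \<noteq> pid" if r: "r \<in> R'" for r
  proof -
    obtain s where s: "s \<in> T" "r = pmul p' s" using r R'L by (auto simp: p'_def)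
    show "r \<in> pauli_on m" using s p'P TP pauli_on_pmul by blast
    show "r \<noteq> pid" using s p'N by (auto simp: pmul_eq_pid)
  qed
  have S2P: "u \<in> pauli_on k" if "u \<in> S2" for u using that grp(2) by blast
  define f where "f = (\<lambda>(r, u). rep r u)"
  define R where "R = f ` (R' \<times> S2)"
  define U where "U = pmul p (E p')"
  have UP: "U \<in> pauli_on (m * k)" unfolding U_def by (rule pauli_on_pmul[OF pP encP[OF p'P]])
  have Ub: "\<And>i. i < m \<Longrightarrow> block k i U \<in> S2" unfolding U_def p'_def using decomp(2) p by blast
  have sub: "R \<subseteq> pmul p ` T2"
  proof
    fix y assume "y \<in> R"
    then obtain r u where ru: "r \<in> R'" "u \<in> S2" "y = rep r u" by (auto simp: R_def f_def)
    obtain s where s: "s \<in> T" "r = pmul p' s" using ru(1) R'L by (auto simp: p'_def)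
    define x where "x = pmul (E s) (pmul U (tt r u))"
    have "\<forall>i<m. block k i (pmul U (tt r u)) \<in> S2"
      using Ub block_tt[OF S2P[OF ru(2)]] ru(2) grp(3) grp(4) by (simp add: block_pmul)
    then have xT: "x \<in> T2" unfolding T2_mem x_def using s(1) pauli_on_pmul[OF UP ttP] by blast
    have "y = pmul (pmul (E p') (E s)) (tt r u)" using ru(3) s(2) by (simp add: rep_def enc_hom)
    also have "\<dots> = pmul p x" unfolding x_def U_def by (rule xor_id[symmetric])
    finally show "y \<in> pmul p ` T2" using xT by blast
  qed
  have inj: "inj_on f (R' \<times> S2)"
  proof (rule inj_onI, clarify)
    fix r1 u1 r2 u2 assume r1: "r1 \<in> R'" and u1: "u1 \<in> S2" and r2: "r2 \<in> R'" and u2: "u2 \<in> S2"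
      and e: "f (r1, u1) = f (r2, u2)"
    have e': "rep r1 u1 = rep r2 u2" using e by (simp add: f_def)
    have bl: "pmul (L (r1 i)) (if r1 i \<noteq> (False, False) then u1 else pid) =
              pmul (L (r2 i)) (if r2 i \<noteq> (False, False) then u2 else pid)" if i: "i < m" for i
      using block_rep[OF S2P[OF u1] i, of r1] block_rep[OF S2P[OF u2] i, of r2] e' by simp
    have req: "r1 = r2"
    proof
      fix i show "r1 i = r2 i"
      proof (cases "i < m")
        case True
        have "pmul (L (r1 i)) (L (r2 i)) = pmul (if r1 i \<noteq> (False, False) then u1 else pid)
               (if r2 i \<noteq> (False, False) then u2 else pid)"
          by (rule pmul_eq_swap[OF bl[OF True]])
        moreover have "pmul (if r1 i \<noteq> (False, False) then u1 else pid)
               (if r2 i \<noteq> (False, False) then u2 else pid) \<in> S2"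
          using u1 u2 grp(3) by (intro grp(4)) auto
        ultimately have "L (vadd (r1 i) (r2 i)) \<in> S2" by (simp add: lam_hom)
        then have "vadd (r1 i) (r2 i) = (False, False)" by (rule lam_in_S2)
        then show ?thesis by (auto simp: vadd_def prod_eq_iff)
      next
        case False
        then show ?thesis using R'P(1)[OF r1] R'P(1)[OF r2] by (simp add: pauli_on_def)
      qed
    qed
    obtain i where i: "r1 i \<noteq> (False, False)" using R'P(2)[OF r1] by (auto simp: pid_def)
    have im: "i < m" using pauli_on_lt[OF R'P(1)[OF r1] i] .
    have "pmul (L (r1 i)) u1 = pmul (L (r1 i)) u2" using bl[OF im] i req by simp
    then show "r1 = r2 \<and> u1 = u2" using req pmul_inj by blast
  qed
  have finR: "finite R" unfolding R_def using R'f finS2 by simp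
  have cardR: "card R = card R' * card S2"
    unfolding R_def using card_image[OF inj] by (simp add: card_cartesian_product)
  have disj: "c_disjoint (c' * c2) R"
    unfolding c_disjoint_def
  proof
    fix a
    show "card {y\<in>R. a \<in> supp y} \<le> c' * c2"
    proof (cases "a < m * k")
      case False
      have e: "{y\<in>R. a \<in> supp y} = {}"
        using rep_out R'P(1) False by (auto simp: R_def f_def supp_def)
      show ?thesis unfolding e by simp
    next
      case True
      define i where "i = a div k"
      define j where "j = a mod k"
      have im: "i < m" using True k0 by (simp add: i_def div_less_iff_less_mult)
      define A where "A = {r\<in>R'. r i \<noteq> (False, False)}"
      define B where "B = (\<lambda>r. {u\<in>S2. pmul (L (r i)) u j \<noteq> (False, False)})"
      have "{y\<in>R. a \<in> supp y} \<subseteq> f ` Sigma A B"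
      proof
        fix y assume y: "y \<in> {y\<in>R. a \<in> supp y}"
        then obtain r u where ru: "r \<in> R'" "u \<in> S2" "y = rep r u" by (auto simp: R_def f_def)
        have "rep r u a \<noteq> (False, False)" using y ru by (simp add: supp_def)
        then have nz: "pmul (L (r i)) (if r i \<noteq> (False, False) then u else pid) j \<noteq> (False, False)"
          using rep_val[OF True, of r u] block_rep[OF S2P[OF ru(2)] im, of r] by (simp add: i_def j_def)
        then have ri: "r i \<noteq> (False, False)" by auto
        then have "pmul (L (r i)) u j \<noteq> (False, False)" using nz by simp
        then have "(r, u) \<in> Sigma A B" using ru ri by (simp add: A_def B_def)
        then show "y \<in> f ` Sigma A B" using ru(3) by (force simp: f_def)
      qed
      moreover have finAB: "finite (Sigma A B)"
        using R'f finS2 by (intro finite_SigmaI) (auto simp: A_def B_def)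
      ultimately have "card {y\<in>R. a \<in> supp y} \<le> card (f ` Sigma A B)"
        by (intro card_mono) auto
      also have "\<dots> \<le> card (Sigma A B)" using finAB by (rule card_image_le)
      also have "\<dots> = (\<Sum>r\<in>A. card (B r))"
        using R'f finS2 by (intro card_SigmaI) (auto simp: A_def B_def)
      also have "\<dots> \<le> (\<Sum>r\<in>A. c2)" by (rule sum_mono) (simp add: B_def count_le_c2)
      also have "\<dots> = card A * c2" by simp
      also have "card A \<le> c'"
        using R'd unfolding c_disjoint_def A_def supp_def by simp
      then have "card A * c2 \<le> c' * c2" by simp
      finally show ?thesis .
    qed
  qed
  show ?thesis using sub finR cardR disj by blast
qed

lemma step:
  assumes ex: "\<exists>p. p \<in> normaliser m T - T" and c1: "1 \<le> c'" and x0: "0 \<le> x"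
    and rat: "x \<le> real a' / real c'"
    and H: "\<forall>L\<in>logicals m T. \<exists>R\<subseteq>L. finite R \<and> a' \<le> card R \<and> c_disjoint c' R"
  shows "\<exists>p. p \<in> normaliser (m * k) T2 - T2"
    and "\<exists>a c. 1 \<le> c \<and> x * (4 / 3) \<le> real a / real c \<and>
           (\<forall>L\<in>logicals (m * k) T2. \<exists>R\<subseteq>L. finite R \<and> a \<le> card R \<and> c_disjoint c R)"
proof -
  show "\<exists>p. p \<in> normaliser (m * k) T2 - T2" using ex enc_notin by blast
  have "x * (4 / 3) \<le> (real a' / real c') * (real (card S2) / real c2)"
    using rat c2_ratio x0 by (intro mult_mono) auto
  also have "\<dots> = real (a' * card S2) / real (c' * c2)" by simp
  finally have r: "x * (4 / 3) \<le> real (a' * card S2) / real (c' * c2)" .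
  have c: "1 \<le> c' * c2" using c1 c2_pos by (metis mult_le_mono nat_mult_1)
  have "\<forall>L\<in>logicals (m * k) T2. \<exists>R\<subseteq>L. finite R \<and> a' * card S2 \<le> card R \<and> c_disjoint (c' * c2) R"
  proof
    fix L assume "L \<in> logicals (m * k) T2"
    then obtain p where L: "L = pmul p ` T2" and p: "p \<in> normaliser (m * k) T2 - T2"
      by (auto simp: logicals_def)
    have "pmul (dec p) ` T \<in> logicals m T" using dec_notin[OF p] by (auto simp: logicals_def)
    then obtain R' where R': "R' \<subseteq> pmul (dec p) ` T" "finite R'" "a' \<le> card R'" "c_disjoint c' R'"
      using H by blast
    obtain R where R: "R \<subseteq> pmul p ` T2" "finite R" "card R = card R' * card S2" "c_disjoint (c' * c2) R"
      using reps[OF p R'(1,2,4)] by blast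
    have "a' * card S2 \<le> card R" using R(3) R'(3) by simp
    then show "\<exists>R\<subseteq>L. finite R \<and> a' * card S2 \<le> card R \<and> c_disjoint (c' * c2) R"
      using R L by blast
  qed
  then show "\<exists>a c. 1 \<le> c \<and> x * (4 / 3) \<le> real a / real c \<and>
           (\<forall>L\<in>logicals (m * k) T2. \<exists>R\<subseteq>L. finite R \<and> a \<le> card R \<and> c_disjoint c R)"
    using r c by blast
qed

end



lemma pow43: "filterlim (\<lambda>l::nat. (4/3::real) ^ l) at_top sequentially"
  unfolding filterlim_at_top
proof
  fix Z :: real
  show "eventually (\<lambda>l. Z \<le> (4/3::real) ^ l) sequentially"
    unfolding eventually_sequentially
  proof (intro exI allI impI)
    fix l assume l: "nat \<lceil>3 * Z\<rceil> \<le> l"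
    have "3 * Z \<le> real (nat \<lceil>3 * Z\<rceil>)" by (rule real_nat_ceiling_ge)
    also have "\<dots> \<le> real l" using l by simp
    finally have a: "3 * Z \<le> real l" .
    have "1 + real l * (1/3) \<le> (1 + 1/3::real) ^ l" by (rule Bernoulli_inequality) simp
    then show "Z \<le> (4/3::real) ^ l" using a by simp
  qed
qed

lemma logical_bound:
  assumes TP: "T \<subseteq> pauli_on m" and clT: "\<And>g h. g \<in> T \<Longrightarrow> h \<in> T \<Longrightarrow> pmul g h \<in> T"
    and L: "L \<in> logicals m T" and R: "R \<subseteq> L" "finite R" "c_disjoint c R"
  shows "card R \<le> c * m"
proof -
  obtain p where Lp: "L = pmul p ` T" and p: "p \<in> normaliser m T - T" using L by (auto simp: logicals_def)
  have pP: "p \<in> pauli_on m" using p by (simp add: normaliser_def)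
  have rP: "r \<in> pauli_on m" "supp r \<noteq> {}" if r: "r \<in> R" for r
  proof -
    obtain t where t: "t \<in> T" "r = pmul p t" using r R Lp by blast
    show "r \<in> pauli_on m" using t pP TP pauli_on_pmul by blast
    have "r \<noteq> pid" using t p by (auto simp: pmul_eq_pid)
    then show "supp r \<noteq> {}" by (auto simp: supp_def pid_def fun_eq_iff)
  qed
  have suppeq: "supp r = {q\<in>{..<m}. q \<in> supp r}" if "r \<in> R" for r
    using rP(1)[OF that] pauli_on_lt by (auto simp: supp_def)
  have "card R = (\<Sum>r\<in>R. 1)" by simp
  also have "\<dots> \<le> (\<Sum>r\<in>R. card (supp r))"
  proof (rule sum_mono)
    fix r assume r: "r \<in> R"
    have "supp r \<subseteq> {..<m}" using suppeq[OF r] by auto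
    then have "finite (supp r)" by (rule finite_subset) simp
    then show "1 \<le> card (supp r)" using rP(2)[OF r] by (simp add: Suc_le_eq card_gt_0_iff)
  qed
  also have "\<dots> = (\<Sum>r\<in>R. \<Sum>q<m. if q \<in> supp r then 1 else 0)"
  proof (rule sum.cong[OF refl])
    fix r assume r: "r \<in> R"
    have "card (supp r) = card {q\<in>{..<m}. q \<in> supp r}" by (rule arg_cong[where f=card, OF suppeq[OF r]])
    also have "\<dots> = (\<Sum>q<m. if q \<in> supp r then 1 else 0)" by (rule card_filter_sum) simp
    finally show "card (supp r) = (\<Sum>q<m. if q \<in> supp r then 1 else 0)" .
  qed
  also have "\<dots> = (\<Sum>q<m. \<Sum>r\<in>R. if q \<in> supp r then 1 else 0)" by (rule sum.swap)
  also have "\<dots> = (\<Sum>q<m. card {r\<in>R. q \<in> supp r})" using R(2) by (simp add: card_filter_sum)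
  also have "\<dots> \<le> (\<Sum>q<m. c)" using R(3) by (intro sum_mono) (simp add: c_disjoint_def)
  also have "\<dots> = c * m" by simp
  finally show ?thesis .
qed

lemma disj_lower:
  assumes TP: "T \<subseteq> pauli_on m" and clT: "\<And>g h. g \<in> T \<Longrightarrow> h \<in> T \<Longrightarrow> pmul g h \<in> T"
    and ex: "p0 \<in> normaliser m T - T" and c1: "1 \<le> c"
    and H: "\<forall>L\<in>logicals m T. \<exists>R\<subseteq>L. finite R \<and> a \<le> card R \<and> c_disjoint c R"
  shows "real a / real c \<le> disjointness m T"
proof -
  define L0 where "L0 = pmul p0 ` T"
  have L0: "L0 \<in> logicals m T" using ex by (auto simp: L0_def logicals_def)
  have bnd: "y \<le> c' * m" if "\<forall>L \<in> logicals m T. \<exists>R. R \<subseteq> L \<and> finite R \<and> card R \<ge> y \<and> c_disjoint c' R" for y c'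
  proof -
    have "\<exists>R. R \<subseteq> L0 \<and> finite R \<and> card R \<ge> y \<and> c_disjoint c' R" by (rule bspec[OF that L0])
    then obtain R where "R \<subseteq> L0" "finite R" "card R \<ge> y" "c_disjoint c' R" by blast
    then show ?thesis using logical_bound[OF TP clT L0, of R c'] by simp
  qed
  have P0: "\<forall>L \<in> logicals m T. \<exists>R. R \<subseteq> L \<and> finite R \<and> card R \<ge> (0::nat) \<and> c_disjoint c' R" for c'
    by (intro ballI exI[of _ "{}"]) (simp add: c_disjoint_def)
  have ub: "udisj m T c' \<le> c' * m" for c'
  proof -
    let ?P = "\<lambda>y. \<forall>L \<in> logicals m T. \<exists>R. R \<subseteq> L \<and> finite R \<and> card R \<ge> y \<and> c_disjoint c' R"
    have "?P (Greatest ?P)" by (rule GreatestI_nat[of ?P 0 "c' * m"]) (rule P0, rule bnd)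
    then have "Greatest ?P \<le> c' * m" by (rule bnd)
    then show ?thesis by (simp add: udisj_def)
  qed
  have lb: "a \<le> udisj m T c"
  proof -
    let ?P = "\<lambda>y. \<forall>L \<in> logicals m T. \<exists>R. R \<subseteq> L \<and> finite R \<and> card R \<ge> y \<and> c_disjoint c R"
    have "a \<le> Greatest ?P" by (rule Greatest_le_nat[of ?P a "c * m"]) (fact H, rule bnd)
    then show ?thesis by (simp add: udisj_def)
  qed
  define X where "X = {real (udisj m T c') / real c' | c'. c' \<ge> 1}"
  have bdd: "bdd_above X"
  proof (rule bdd_aboveI[of _ "real m"])
    fix x assume "x \<in> X"
    then obtain c' where x: "x = real (udisj m T c') / real c'" "c' \<ge> 1" by (auto simp: X_def)
    have "real (udisj m T c') \<le> real c' * real m" using ub[of c'] by (metis of_nat_le_iff of_nat_mult)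
    then show "x \<le> real m" using x by (simp add: divide_le_eq mult.commute)
  qed
  have "real a / real c \<le> real (udisj m T c) / real c" using lb by (intro divide_right_mono) auto
  also have "\<dots> \<le> Sup X" by (rule cSup_upper[OF _ bdd]) (use c1 in \<open>auto simp: X_def\<close>)
  finally show ?thesis by (simp add: disjointness_def X_def)
qed



lemma fam_step:
  assumes inn: "inner k S2 d xb zb" and m1: "1 \<le> m" and TP: "T \<subseteq> pauli_on m" and pidT: "pid \<in> T"
    and clT: "\<forall>g h. g \<in> T \<longrightarrow> h \<in> T \<longrightarrow> pmul g h \<in> T"
    and ex: "\<exists>p. p \<in> normaliser m T - T" and c1: "1 \<le> c'" and x0: "0 \<le> x"
    and rat: "x \<le> real a' / real c'"
    and H: "\<forall>L\<in>logicals m T. \<exists>R\<subseteq>L. finite R \<and> a' \<le> card R \<and> c_disjoint c' R"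
  shows "1 \<le> m * k \<and> concat_stab m T k S2 xb zb \<subseteq> pauli_on (m * k) \<and> pid \<in> concat_stab m T k S2 xb zb \<and>
    (\<forall>g h. g \<in> concat_stab m T k S2 xb zb \<longrightarrow> h \<in> concat_stab m T k S2 xb zb \<longrightarrow> pmul g h \<in> concat_stab m T k S2 xb zb) \<and>
    (\<exists>p. p \<in> normaliser (m * k) (concat_stab m T k S2 xb zb) - concat_stab m T k S2 xb zb) \<and>
    (\<exists>a c. 1 \<le> c \<and> x * (4 / 3) \<le> real a / real c \<and>
       (\<forall>L\<in>logicals (m * k) (concat_stab m T k S2 xb zb). \<exists>R\<subseteq>L. finite R \<and> a \<le> card R \<and> c_disjoint c R))"
proof -
  interpret concat k S2 d xb zb m T
    unfolding concat_def concat_axioms_def using inn m1 TP pidT clT by blast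
  have "1 \<le> m * k" using m1 k0 by simp
  then show ?thesis using T2P pidT2 clT2 step[OF ex c1 x0 rat H] unfolding T2_def by blast
qed

theorem theorem3:
  fixes n :: "nat \<Rightarrow> nat" and S :: "nat \<Rightarrow> pauli set" and d :: "nat \<Rightarrow> nat"
    and xb zb :: "nat \<Rightarrow> pauli" and B :: nat
  assumes codes: "\<And>i. stab_code (n i) (S i) (d i)"
    and nontrivial: "\<And>i. d i \<ge> 2"
    and bounded: "\<And>i. n i \<le> B"
    and logical_basis: "\<And>i. xb i \<in> normaliser (n i) (S i) \<and> zb i \<in> normaliser (n i) (S i)
                              \<and> \<not> commutes (xb i) (zb i)"
  shows "filterlim (\<lambda>l. disjointness (fst (fam n S xb zb l)) (snd (fam n S xb zb l)))
           at_top sequentially"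
proof -
  define F where "F = fam n S xb zb"
  have inn: "inner (n i) (S i) (d i) (xb i) (zb i)" for i
    unfolding inner_def using codes nontrivial logical_basis by blast
  define Inv where "Inv l \<longleftrightarrow> (1 \<le> fst (F l) \<and> snd (F l) \<subseteq> pauli_on (fst (F l)) \<and> pid \<in> snd (F l) \<and>
     (\<forall>g h. g \<in> snd (F l) \<longrightarrow> h \<in> snd (F l) \<longrightarrow> pmul g h \<in> snd (F l)) \<and>
     (\<exists>p. p \<in> normaliser (fst (F l)) (snd (F l)) - snd (F l)) \<and>
     (\<exists>a c. 1 \<le> c \<and> (4/3::real) ^ l \<le> real a / real c \<and>
        (\<forall>L\<in>logicals (fst (F l)) (snd (F l)). \<exists>R\<subseteq>L. finite R \<and> a \<le> card R \<and> c_disjoint c R)))" for l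
  have inv: "Inv l" for l
  proof (induction l)
    case 0
    interpret I0: inner "n 0" "S 0" "d 0" "xb 0" "zb 0" by (rule inn)
    have F0: "F 0 = (n 0, S 0)" by (simp add: F_def)
    have ex: "xb 0 \<in> normaliser (n 0) (S 0) - S 0"
      using I0.xbN I0.S2_comm_zb I0.xz by blast
    have H: "\<forall>L\<in>logicals (n 0) (S 0). \<exists>R\<subseteq>L. finite R \<and> 1 \<le> card R \<and> c_disjoint 1 R"
    proof
      fix L assume "L \<in> logicals (n 0) (S 0)"
      then obtain p where L: "L = pmul p ` S 0" by (auto simp: logicals_def)
      have "p \<in> L" unfolding L using I0.grp(3) by (intro image_eqI[of _ _ pid]) simp_all
      moreover have "c_disjoint 1 {p}"
        unfolding c_disjoint_def
      proof
        fix q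
        have "{r \<in> {p}. q \<in> supp r} \<subseteq> {p}" by blast
        then show "card {r \<in> {p}. q \<in> supp r} \<le> 1" using card_mono[of "{p}"] by simp
      qed
      ultimately show "\<exists>R\<subseteq>L. finite R \<and> 1 \<le> card R \<and> c_disjoint 1 R"
        by (intro exI[of _ "{p}"]) simp
    qed
    show ?case unfolding Inv_def F0 using I0.grp ex H
      by (intro conjI exI[of _ "1::nat"]) (auto)
  next
    case (Suc l)
    have FS: "F (Suc l) = (fst (F l) * n (Suc l),
       concat_stab (fst (F l)) (snd (F l)) (n (Suc l)) (S (Suc l)) (xb (Suc l)) (zb (Suc l)))"
      by (cases "F l") (simp add: F_def)
    from Suc obtain a c where ac: "1 \<le> c" "(4/3::real) ^ l \<le> real a / real c"
      "\<forall>L\<in>logicals (fst (F l)) (snd (F l)). \<exists>R\<subseteq>L. finite R \<and> a \<le> card R \<and> c_disjoint c R"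
      unfolding Inv_def by blast
    from Suc have I: "1 \<le> fst (F l)" "snd (F l) \<subseteq> pauli_on (fst (F l))" "pid \<in> snd (F l)"
      "\<forall>g h. g \<in> snd (F l) \<longrightarrow> h \<in> snd (F l) \<longrightarrow> pmul g h \<in> snd (F l)"
      "\<exists>p. p \<in> normaliser (fst (F l)) (snd (F l)) - snd (F l)"
      unfolding Inv_def by blast+
    have x0: "0 \<le> (4/3::real) ^ l" by simp
    note st = fam_step[OF inn I ac(1) x0 ac(2) ac(3), of "Suc l"]
    have pw: "(4/3::real) ^ Suc l = (4/3) ^ l * (4/3)" by simp
    show ?case unfolding Inv_def FS fst_conv snd_conv pw using st by blast
  qed
  have lower: "(4/3::real) ^ l \<le> disjointness (fst (F l)) (snd (F l))" for l
  proof -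
    from inv[of l] obtain p a c where
      A: "1 \<le> fst (F l)" "snd (F l) \<subseteq> pauli_on (fst (F l))"
         "\<forall>g h. g \<in> snd (F l) \<longrightarrow> h \<in> snd (F l) \<longrightarrow> pmul g h \<in> snd (F l)"
         "p \<in> normaliser (fst (F l)) (snd (F l)) - snd (F l)" "1 \<le> c" "(4/3::real) ^ l \<le> real a / real c"
         "\<forall>L\<in>logicals (fst (F l)) (snd (F l)). \<exists>R\<subseteq>L. finite R \<and> a \<le> card R \<and> c_disjoint c R"
      unfolding Inv_def by blast
    have "real a / real c \<le> disjointness (fst (F l)) (snd (F l))"
      by (rule disj_lower[OF A(2) _ A(4) A(5) A(7)]) (use A(3) in blast)
    then show ?thesis using A(6) by linarith
  qed
  show ?thesis
    by (rule filterlim_at_top_mono[OF pow43]) (use lower in \<open>simp add: F_def\<close>)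
qed


end
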